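(* Let $(D;H)$ be a based diagram of $(K_n;H)$ with hamiltonian cycle $H=v_1v_2\cdots v_nv_1$, and let $M(D;H)=(a_{(i,j)})$ be its matrix. Then $$\varepsilon(D;H)=\sum_{i<k<j<l}\left\lfloor\frac{a_{(i,j)}\,a_{(k,l)}+1}{2}\right\rfloor .$$
   Context: $K_n$ is the complete graph with vertices $v_1,\dots,v_n$ and $H=v_1v_2\cdots v_nv_1$ is a hamiltonian cycle. A based diagram $(D;H)$ of $(K_n;H)$ is a diagram of $K_n$ on $S^2$ in which $H$ is drawn on the equator and every other edge diagram lies (apart from its endpoints) in the Northern or the Southern Hemisphere. Let $e_{(i,j)}$ denote the edge diagram joining $v_i$ and $v_j$. Let $A$ be the boundary of a small regular neighbourhood of $H$; each edge diagram $e$ not in $H$ meets $A$ in two points $e^1,e^2$. For edge diagrams $e,f$ not in $H$, the cross-index $\varepsilon_H(e,f)$ is $1$ if $e$ and $f$ lie in the same hemisphere and their intersection points with $A$ alternate along $A$ (appear in cyclic order $e^\alpha,f^\beta,e^\gamma,f^\delta$), and $0$ otherwise; $\varepsilon(D;H)$ is the sum of $\varepsilon_H(e,f)$ over all unordered pairs of distinct edge diagrams not in $H$. The matrix $M(D;H)=(a_{(i,j)})_{1\le i,j\le n}$ is defined by $a_{(i,j)}=1$ if $j\ge i+2$, $(i,j)\neq(1,n)$ and $e_{(i,j)}$ is in the Northern Hemisphere; $a_{(i,j)}=-1$ if $j\ge i+2$, $(i,j)\ne(1,n)$ and $e_{(i,j)}$ is in the Southern Hemisphere; and $a_{(i,j)}=0$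 if $j\le i+1$ or $(i,j)=(1,n)$. The sum is over all $1\le i<k<j<l\le n$. *)

theory Defs
  imports Complex_Main
begin

text \<open>Combinatorial model of a based diagram (D;H) of (K_n;H), H = v_1 v_2 ... v_n v_1.
  Vertices are 1..n.  An edge not in H is a pair (i,j) with 1 <= i, i+2 <= j <= n,
  (i,j) ~= (1,n).  The diagram is recorded by the hemisphere of each such edge:
  north (i,j) = True means Northern, False means Southern.\<close>

definition chords :: "nat \<Rightarrow> (nat \<times> nat) set" where
  "chords n = {(i,j). 1 \<le> i \<and> i + 2 \<le> j \<and> j \<le> n \<and> (i,j) \<noteq> (1,n)}"

definition cyc3 :: "nat \<Rightarrow> nat \<Rightarrow> nat \<Rightarrow> bool" where
  "cyc3 a b c \<longleftrightarrow> (a < b \<and> b < c) \<or> (b < c \<and> c < a) \<or> (c < a \<and> a < b)"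

definition cyc4 :: "nat \<Rightarrow> nat \<Rightarrow> nat \<Rightarrow> nat \<Rightarrow> bool" where
  "cyc4 a b c d \<longleftrightarrow> cyc3 a b c \<and> cyc3 a c d"

text \<open>The intersection points of an edge diagram (i,j) with A lie at the positions of
  its endpoints v_i, v_j along A.\<close>
definition alternate :: "nat \<times> nat \<Rightarrow> nat \<times> nat \<Rightarrow> bool" where
  "alternate e f \<longleftrightarrow>
     (\<exists>p q r s. {p, r} = {fst e, snd e} \<and> {q, s} = {fst f, snd f} \<and> cyc4 p q r s)"

definition cross_index :: "(nat \<times> nat \<Rightarrow> bool) \<Rightarrow> nat \<times> nat \<Rightarrow> nat \<times> nat \<Rightarrow> nat" where
  "cross_index north e f = (if north e = north f \<and> alternate e f then 1 else 0)"

text \<open>epsilon(D;H): sum (cross-index is symmetric and 0/1-valued, so this is the number of unordered pairs with index 1) of cross-indices over unordered pairs of distinct edges not in H.\<close>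
definition epsilon :: "nat \<Rightarrow> (nat \<times> nat \<Rightarrow> bool) \<Rightarrow> nat" where
  "epsilon n north =
     card {{e, f} | e f. e \<in> chords n \<and> f \<in> chords n \<and> e \<noteq> f \<and> cross_index north e f = 1}"

definition matrix_entry :: "nat \<Rightarrow> (nat \<times> nat \<Rightarrow> bool) \<Rightarrow> nat \<Rightarrow> nat \<Rightarrow> int" where
  "matrix_entry n north i j =
     (if i + 2 \<le> j \<and> (i, j) \<noteq> (1, n) then (if north (i, j) then 1 else -1) else 0)"

end

theory Submission
  imports Defs
begin

lemma alt_iff:
  assumes "i < (j::nat)" "k < l"
  shows "alternate (i,j) (k,l) \<longleftrightarrow> (i<k \<and> k<j \<and> j<l) \<or> (k<i \<and> i<l \<and> l<j)"
proof
  assume "alternate (i,j) (k,l)"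
  then obtain p q r s where h: "{p,r} = {i,j}" "{q,s} = {k,l}" "cyc4 p q r s"
    unfolding alternate_def by auto
  from h(1) have A: "(p=i \<and> r=j) \<or> (p=j \<and> r=i)" by (auto simp: doubleton_eq_iff)
  from h(2) have B: "(q=k \<and> s=l) \<or> (q=l \<and> s=k)" by (auto simp: doubleton_eq_iff)
  from A B h(3) assms show "(i<k \<and> k<j \<and> j<l) \<or> (k<i \<and> i<l \<and> l<j)"
    unfolding cyc4_def cyc3_def by auto
next
  assume "(i<k \<and> k<j \<and> j<l) \<or> (k<i \<and> i<l \<and> l<j)"
  then show "alternate (i,j) (k,l)"
  proof
    assume "i<k \<and> k<j \<and> j<l"
    then have "cyc4 i k j l" unfolding cyc4_def cyc3_def by auto
    then show ?thesis unfolding alternate_def by fastforce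
  next
    assume "k<i \<and> i<l \<and> l<j"
    then have "cyc4 i l j k" unfolding cyc4_def cyc3_def by auto
    then show ?thesis unfolding alternate_def by fastforce
  qed
qed

theorem lemma2p2:
  fixes n :: nat and north :: "nat \<times> nat \<Rightarrow> bool"
  assumes "n \<ge> 3"
  shows "int (epsilon n north) =
    (\<Sum>(i, k, j, l) \<in> {(i, k, j, l). 1 \<le> i \<and> i < k \<and> k < j \<and> j < l \<and> l \<le> n}.
       \<lfloor>(real_of_int (matrix_entry n north i j * matrix_entry n north k l) + 1) / 2\<rfloor>)"
proof -
  define U where "U = {(i::nat, k::nat, j::nat, l::nat). 1 \<le> i \<and> i < k \<and> k < j \<and> j < l \<and> l \<le> n}"
  define P where "P = (\<lambda>(i::nat, k::nat, j::nat, l::nat). north (i,j) = north (k,l))"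
  define Q where "Q = {x \<in> U. P x}"
  define g where "g = (\<lambda>(i::nat, k::nat, j::nat, l::nat). {(i,j),(k,l)})"
  have finU: "finite U"
  proof (rule finite_subset)
    show "U \<subseteq> {1..n} \<times> {1..n} \<times> {1..n} \<times> {1..n}" unfolding U_def by auto
  qed auto
  have fl: "\<lfloor>(real_of_int (matrix_entry n north i j * matrix_entry n north k l) + 1) / 2\<rfloor>
      = (if P (i,k,j,l) then 1 else 0)" if "(i,k,j,l) \<in> U" for i k j l
  proof -
    have "matrix_entry n north i j = (if north (i,j) then 1 else -1)"
      "matrix_entry n north k l = (if north (k,l) then 1 else -1)"
      using that unfolding U_def matrix_entry_def by auto
    then show ?thesis unfolding P_def by auto
  qed
  have sumeq: "(\<Sum>(i, k, j, l) \<in> U.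
       \<lfloor>(real_of_int (matrix_entry n north i j * matrix_entry n north k l) + 1) / 2\<rfloor>)
      = (\<Sum>x\<in>U. if P x then 1 else 0)"
  proof (rule sum.cong[OF refl])
    fix x assume xU: "x \<in> U"
    obtain i k j l where xe: "x = (i,k,j,l)" by (cases x) auto
    show "(\<lambda>(i, k, j, l). \<lfloor>(real_of_int (matrix_entry n north i j * matrix_entry n north k l) + 1) / 2\<rfloor>) x
      = (if P x then 1 else 0)"
      using fl[of i k j l] xU unfolding xe by (simp only: case_prod_conv)
  qed
  also have "\<dots> = int (card Q)"
    unfolding Q_def by (subst sum.inter_filter[OF finU, symmetric]) simp
  finally have sumeq: "(\<Sum>(i, k, j, l) \<in> U.
       \<lfloor>(real_of_int (matrix_entry n north i j * matrix_entry n north k l) + 1) / 2\<rfloor>)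
      = int (card Q)" .
  define S where "S = {{e, f} | e f. e \<in> chords n \<and> f \<in> chords n \<and> e \<noteq> f \<and> cross_index north e f = 1}"
  have SQ: "S = g ` Q"
  proof
    show "S \<subseteq> g ` Q"
    proof
      fix x assume "x \<in> S"
      then obtain i j k l where x: "x = {(i,j),(k,l)}" "(i,j) \<in> chords n" "(k,l) \<in> chords n"
        "(i,j) \<noteq> (k,l)" "north (i,j) = north (k,l)" "alternate (i,j) (k,l)"
        unfolding S_def cross_index_def by (auto split: if_splits)
      have ij: "i < j" "k < l" "1 \<le> i" "1 \<le> k" "j \<le> n" "l \<le> n" using x(2,3) unfolding chords_def by auto
      from x(6) ij alt_iff have "(i<k \<and> k<j \<and> j<l) \<or> (k<i \<and> i<l \<and> l<j)" by blast
      then show "x \<in> g ` Q"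
      proof
        assume "i<k \<and> k<j \<and> j<l"
        then have "(i,k,j,l) \<in> Q" using ij x(5) unfolding Q_def U_def P_def by auto
        moreover have "x = g (i,k,j,l)" using x(1) unfolding g_def by simp
        ultimately show ?thesis by blast
      next
        assume "k<i \<and> i<l \<and> l<j"
        then have "(k,i,l,j) \<in> Q" using ij x(5) unfolding Q_def U_def P_def by auto
        moreover have "x = g (k,i,l,j)" using x(1) unfolding g_def by (simp add: insert_commute)
        ultimately show ?thesis by blast
      qed
    qed
  next
    show "g ` Q \<subseteq> S"
    proof
      fix x assume "x \<in> g ` Q"
      then obtain i k j l where q: "(i,k,j,l) \<in> Q" "x = {(i,j),(k,l)}" unfolding g_def by auto
      then have h: "1 \<le> i" "i < k" "k < j" "j < l" "l \<le> n" "north (i,j) = north (k,l)"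
        unfolding Q_def U_def P_def by auto
      have "(i,j) \<in> chords n" "(k,l) \<in> chords n" using h unfolding chords_def by auto
      moreover have "alternate (i,j) (k,l)" using alt_iff[of i j k l] h by auto
      moreover have "(i,j) \<noteq> (k,l)" using h by auto
      ultimately show "x \<in> S" unfolding S_def cross_index_def using h q(2) by auto
    qed
  qed
  have inj: "inj_on g Q"
  proof (rule inj_onI)
    fix x y assume "x \<in> Q" "y \<in> Q" "g x = g y"
    then show "x = y" unfolding Q_def U_def g_def by (auto simp: doubleton_eq_iff)
  qed
  have ep: "epsilon n north = card Q"
    unfolding epsilon_def S_def[symmetric] SQ using card_image[OF inj] by simp
  show ?thesis unfolding U_def[symmetric] sumeq ep ..
qed

end
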